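(* There is no finite saturated Nmatrix $\mathbb{M}$ such that $\vdash_{\mathbb{M}}=\vdash_{\diamond}$.
   Context: $\vdash_\diamond$ is the single-conclusion logic of the two-valued Nmatrix $\langle\{0,1\},\cdot,\{1\}\rangle$ with one binary connective $\diamond$ (platypus) interpreted by $\diamond(0,0)=\{0\}$, $\diamond(1,1)=\{1\}$, $\diamond(0,1)=\diamond(1,0)=\{0,1\}$. For an Nmatrix $\mathbb{M}=\langle V,\cdot_{\mathbb{M}},D\rangle$, $\rhd_{\mathbb{M}}$ is its multiple-conclusion logic ($\Gamma\rhd_{\mathbb{M}}\Delta$ iff every $\mathbb{M}$-valuation with $v(\Gamma)\subseteq D$ has $v(\Delta)\cap D\neq\emptyset$) and $\vdash_{\mathbb{M}}$ its single-conclusion fragment. $\mathbb{M}$ is saturated if for every $\vdash_{\mathbb{M}}$-theory $\Gamma$ there is an $\mathbb{M}$-valuation $v$ with $v(\psi)\in D$ iff $\psi\in\Gamma$; equivalently, if $\Gamma\not\vdash_{\mathbb{M}}\psi$ for every $\psi\in\Delta$ then $\Gamma\not\rhd_{\mathbb{M}}\Delta$. *)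

theory Defs
  imports Main
begin

datatype fm = Var nat | Dia fm fm

text \<open>An Nmatrix with value set UNIV of type 'v, multi-function interpretation dop of the
  connective, and designated set D. Nmatrix condition: every entry of the table is nonempty.\<close>
definition is_Nmatrix :: "('v \<Rightarrow> 'v \<Rightarrow> 'v set) \<Rightarrow> 'v set \<Rightarrow> bool" where
  "is_Nmatrix dop D \<longleftrightarrow> (\<forall>a b. dop a b \<noteq> {})"

definition valuation :: "('v \<Rightarrow> 'v \<Rightarrow> 'v set) \<Rightarrow> (fm \<Rightarrow> 'v) \<Rightarrow> bool" where
  "valuation dop v \<longleftrightarrow> (\<forall>A B. v (Dia A B) \<in> dop (v A) (v B))"

definition nm_cons :: "('v \<Rightarrow> 'v \<Rightarrow> 'v set) \<Rightarrow> 'v set \<Rightarrow> fm set \<Rightarrow> fm \<Rightarrow> bool" where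
  "nm_cons dop D \<Gamma> \<psi> \<longleftrightarrow> (\<forall>v. valuation dop v \<longrightarrow> v ` \<Gamma> \<subseteq> D \<longrightarrow> v \<psi> \<in> D)"

definition nm_theory :: "('v \<Rightarrow> 'v \<Rightarrow> 'v set) \<Rightarrow> 'v set \<Rightarrow> fm set \<Rightarrow> bool" where
  "nm_theory dop D \<Gamma> \<longleftrightarrow> (\<forall>\<psi>. nm_cons dop D \<Gamma> \<psi> \<longrightarrow> \<psi> \<in> \<Gamma>)"

definition saturated :: "('v \<Rightarrow> 'v \<Rightarrow> 'v set) \<Rightarrow> 'v set \<Rightarrow> bool" where
  "saturated dop D \<longleftrightarrow> (\<forall>\<Gamma>. nm_theory dop D \<Gamma> \<longrightarrow>
      (\<exists>v. valuation dop v \<and> (\<forall>\<psi>. v \<psi> \<in> D \<longleftrightarrow> \<psi> \<in> \<Gamma>)))"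

text \<open>The platypus Nmatrix on {0,1} (False = 0, True = 1), designated {1}.\<close>
definition platypus :: "bool \<Rightarrow> bool \<Rightarrow> bool set" where
  "platypus a b = (if a = b then {a} else {False, True})"

definition platypus_cons :: "fm set \<Rightarrow> fm \<Rightarrow> bool" where
  "platypus_cons = nm_cons platypus {True}"

end

theory Submission
  imports Defs
begin

fun sub :: "nat \<Rightarrow> nat \<Rightarrow> fm \<Rightarrow> fm" where
  "sub i j (Var k) = Var i"
| "sub i j (Dia A B) = (if A = Var 0 \<and> B = Var 0 then Dia (Var i) (Var j) else Dia (sub i j A) (sub i j B))"

fun pu :: "nat \<Rightarrow> fm \<Rightarrow> bool" where
  "pu k (Var m) = (m \<noteq> k)"
| "pu k (Dia A B) = (if pu k A = pu k B then pu k A else True)"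

lemma pu_val: "valuation platypus (pu k)"
  unfolding valuation_def platypus_def by auto

lemma plat_idem: "platypus_cons {Dia (Var 0) (Var 0)} (Var 0)"
  unfolding platypus_cons_def nm_cons_def valuation_def platypus_def
  by (metis empty_iff image_subset_iff insert_iff)

lemma plat_notk: "\<not> platypus_cons {Dia (Var i) (Var j) | i j. i < j} (Var k)"
proof -
  have "pu k ` {Dia (Var i) (Var j) | i j. i < j} \<subseteq> {True}" by auto
  moreover have "pu k (Var k) \<notin> {True}" by simp
  ultimately show ?thesis unfolding platypus_cons_def nm_cons_def using pu_val by blast
qed

theorem proposition5:
  fixes dop :: "'v::finite \<Rightarrow> 'v \<Rightarrow> 'v set" and D :: "'v set"
  assumes "is_Nmatrix dop D" and "saturated dop D"
  shows "nm_cons dop D \<noteq> platypus_cons"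
proof
  assume eq: "nm_cons dop D = platypus_cons"
  define S where "S = {Dia (Var i) (Var j) | i j. i < j}"
  define G where "G = {\<psi>. nm_cons dop D S \<psi>}"
  have th: "nm_theory dop D G"
    unfolding nm_theory_def G_def nm_cons_def
    by (smt (verit, best) image_subset_iff mem_Collect_eq subsetI)
  then obtain v where v: "valuation dop v" and vD: "\<And>\<psi>. v \<psi> \<in> D \<longleftrightarrow> \<psi> \<in> G"
    using assms(2) unfolding saturated_def by blast
  have SG: "S \<subseteq> G" unfolding G_def nm_cons_def by auto
  have nk: "v (Var k) \<notin> D" for k
    using vD plat_notk[of k] eq unfolding G_def S_def by simp
  have "\<not> inj (\<lambda>k. v (Var k))"
  proof
    assume "inj (\<lambda>k. v (Var k))"
    moreover have "finite (range (\<lambda>k. v (Var k)))" by simp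
    ultimately have "finite (UNIV :: nat set)" using finite_imageD by blast
    thus False by simp
  qed
  then obtain i j where ij: "i \<noteq> j" "v (Var i) = v (Var j)" unfolding inj_def by blast
  obtain i j where ij: "i < j" "v (Var i) = v (Var j)"
    using ij by (metis linorder_neqE_nat)
  have dD: "v (Dia (Var i) (Var j)) \<in> D"
    using vD SG ij(1) unfolding S_def by blast
  define w where "w = (\<lambda>\<phi>. v (sub i j \<phi>))"
  have wv: "valuation dop w"
    unfolding valuation_def
  proof (intro allI)
    fix A B
    show "w (Dia A B) \<in> dop (w A) (w B)"
    proof (cases "A = Var 0 \<and> B = Var 0")
      case True
      then show ?thesis using v ij(2) unfolding w_def valuation_def by (metis sub.simps)
    next
      case False
      then show ?thesis using v unfolding w_def valuation_def by auto
    qed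
  qed
  have "nm_cons dop D {Dia (Var 0) (Var 0)} (Var 0)" using eq plat_idem by simp
  hence "w (Var 0) \<in> D" using wv dD unfolding nm_cons_def w_def by (metis sub.simps image_empty image_insert insert_subset empty_subsetI)
  thus False using nk unfolding w_def by simp
qed

end
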